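(* Let $\mathcal C$ be a pseudo-purifiable discard category, let $(A_i)_{i\ge1}$, $(B_i)_{i\ge1}$ be sequences of objects, and let $(f_k)_{k\ge1}$ with $f_k\in\mathcal C(A_1\otimes\cdots\otimes A_k,B_1\otimes\cdots\otimes B_k)$ be a monotone and regular sequence. Then there exists a regular stateful morphism sequence $\alpha$ over $\mathcal C$ with inputs $(A_i)$ and outputs $(B_i)$ such that $\mathrm{FA}_k(\alpha)=f_k$ for all $k\ge1$. (That is, the functor $\mathrm{FA}$ from regular stateful morphism sequences to finite approximation sequences is full.)
   Context: Monoidal categories are treated as strict; $\sigma$ is the symmetry; write $\hat A_k=A_1\otimes\cdots\otimes A_k$. A discard category is a symmetric monoidal category with, for each object $A$, $\top_A:A\to I$ with $\top_I=\mathrm{id}_I$, $\top_{A\otimes B}=\top_A\otimes\top_B$; $f$ is causal if $\top\circ f=\top$. For $f,g\in\mathcal C(A,B)$, $f\preceq g$ iff there are $X$, $g_0\in\mathcal C(A,B\otimes X)$, $f_0\in\mathcal C(X,I)$ with $f=(\mathrm{id}_B\otimes f_0)\circ g_0$ and $g=(\mathrm{id}_B\otimes\top_X)\circ g_0$. $p\in\mathcal C(A,B\otimes X)$ is a pseudo-purification of $f\in\mathcal C(A,B)$ ($p\in\mathrm{Pure}(f)$) if for every $Y$ and $g\in\mathcal C(A,B\otimes Y)$ with $f=(\mathrm{id}_B\otimes\top_Y)\circ g$ there is a causal $c\in\mathcal C(X,Y)$ with $g=(\mathrm{id}_B\otimes c)\circ p$. Pseudo-purifiable: every morphism has a pseudo-purification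 and, for $f_1\in\mathcal C(A_1,B_1\otimes C)$, $f_2\in\mathcal C(C\otimes A_2,B_2)$, $p_1\in\mathrm{Pure}(f_1)$, $p_1:A_1\to B_1\otimes C\otimes X_1$, $p_2\in\mathrm{Pure}(f_2)$, $p_2:C\otimes A_2\to B_2\otimes X_2$, the morphism $(\mathrm{id}_{B_1\otimes B_2}\otimes\sigma_{X_2,X_1})\circ(\mathrm{id}_{B_1}\otimes p_2\otimes\mathrm{id}_{X_1})\circ(\mathrm{id}_{B_1\otimes C}\otimes\sigma_{X_1,A_2})\circ(p_1\otimes\mathrm{id}_{A_2})$ is in $\mathrm{Pure}((\mathrm{id}_{B_1}\otimes f_2)\circ(f_1\otimes\mathrm{id}_{A_2}))$. The sequence $(f_k)$ is monotone if for every $k\ge1$: $(\mathrm{id}_{\hat B_k}\otimes\top_{B_{k+1}})\circ f_{k+1}\preceq f_k\otimes\top_{A_{k+1}}$. It is regular if there exist $n\ge1$, objects $A',B',M$ with $A_k=A'$ and $B_k=B'$ for all $k>n$, and morphisms $g^{\mathrm{irreg}}\in\mathcal C(\hat A_n,\hat B_n\otimes M)$, $g^{\mathrm{reg}}\in\mathcal C(M\otimes A',B'\otimes M)$ such that, setting $\Psi_n=g^{\mathrm{irreg}}$ and $\Psi_{k+1}=(\mathrm{id}_{\hat B_k}\otimes g^{\mathrm{reg}})\circ(\Psi_k\otimes\mathrm{id}_{A_{k+1}})$, we have $f_k=(\mathrm{id}_{\hat B_k}\otimes\top_M)\circ\Psi_k$ for all $k\ge n$. A stateful morphism sequence $\alpha$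 consists of objects $(A_i)_{i\ge1},(B_i)_{i\ge1},(M_i)_{i\ge0}$ with $M_0=I$ and layers $\alpha_i\in\mathcal C(A_i\otimes M_{i-1},B_i\otimes M_i)$; it is regular if there is $n$ with $A_k=A_n,B_k=B_n,M_k=M_n,\alpha_k=\alpha_n$ for all $k\ge n$. With $\Phi_1=\alpha_1$ and $\Phi_{k+1}=(\mathrm{id}_{\hat B_k}\otimes\alpha_{k+1})\circ(\mathrm{id}_{\hat B_k}\otimes\sigma_{M_k,A_{k+1}})\circ(\Phi_k\otimes\mathrm{id}_{A_{k+1}})$, set $\mathrm{FA}_k(\alpha)=(\mathrm{id}_{\hat B_k}\otimes\top_{M_k})\circ\Phi_k$. *)

theory Defs
  imports Main
begin

text \<open>Objects are the elements of type 'o, morphisms are those elements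
of type 'm satisfying arr. Composition: comp g f = g after f.\<close>

record ('o, 'm) dcat =
  arr   :: "'m \<Rightarrow> bool"
  dom   :: "'m \<Rightarrow> 'o"
  cod   :: "'m \<Rightarrow> 'o"
  comp  :: "'m \<Rightarrow> 'm \<Rightarrow> 'm"
  ident :: "'o \<Rightarrow> 'm"
  unit  :: "'o"
  otens :: "'o \<Rightarrow> 'o \<Rightarrow> 'o"
  mtens :: "'m \<Rightarrow> 'm \<Rightarrow> 'm"
  sym   :: "'o \<Rightarrow> 'o \<Rightarrow> 'm"
  disc  :: "'o \<Rightarrow> 'm"

definition hom :: "('o, 'm, 'x) dcat_scheme \<Rightarrow> 'o \<Rightarrow> 'o \<Rightarrow> 'm set" where
  "hom C A B = {f. arr C f \<and> dom C f = A \<and> cod C f = B}"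

definition strict_smc :: "('o, 'm, 'x) dcat_scheme \<Rightarrow> bool" where
  "strict_smc C \<longleftrightarrow>
    \<comment> \<open>category\<close>
    (\<forall>A. ident C A \<in> hom C A A) \<and>
    (\<forall>f g. arr C f \<and> arr C g \<and> cod C f = dom C g \<longrightarrow>
        comp C g f \<in> hom C (dom C f) (cod C g)) \<and>
    (\<forall>f g h. arr C f \<and> arr C g \<and> arr C h \<and> cod C f = dom C g \<and> cod C g = dom C h \<longrightarrow>
        comp C h (comp C g f) = comp C (comp C h g) f) \<and>
    (\<forall>f. arr C f \<longrightarrow> comp C (ident C (cod C f)) f = f \<and> comp C f (ident C (dom C f)) = f) \<and>
    \<comment> \<open>strict monoidal structure on objects\<close>
    (\<forall>A B D. otens C (otens C A B) D = otens C A (otens C B D)) \<and>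
    (\<forall>A. otens C (unit C) A = A \<and> otens C A (unit C) = A) \<and>
    \<comment> \<open>tensor of morphisms: a strictly associative, unital bifunctor\<close>
    (\<forall>f g. arr C f \<and> arr C g \<longrightarrow>
        mtens C f g \<in> hom C (otens C (dom C f) (dom C g)) (otens C (cod C f) (cod C g))) \<and>
    (\<forall>f g h. arr C f \<and> arr C g \<and> arr C h \<longrightarrow> mtens C (mtens C f g) h = mtens C f (mtens C g h)) \<and>
    (\<forall>f. arr C f \<longrightarrow> mtens C (ident C (unit C)) f = f \<and> mtens C f (ident C (unit C)) = f) \<and>
    (\<forall>A B. mtens C (ident C A) (ident C B) = ident C (otens C A B)) \<and>
    (\<forall>f g f' g'. arr C f \<and> arr C g \<and> arr C f' \<and> arr C g' \<and> cod C f = dom C g \<and> cod C f' = dom C g' \<longrightarrow>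
        mtens C (comp C g f) (comp C g' f') = comp C (mtens C g g') (mtens C f f')) \<and>
    \<comment> \<open>symmetry\<close>
    (\<forall>A B. sym C A B \<in> hom C (otens C A B) (otens C B A)) \<and>
    (\<forall>f g. arr C f \<and> arr C g \<longrightarrow>
        comp C (mtens C g f) (sym C (dom C f) (dom C g)) = comp C (sym C (cod C f) (cod C g)) (mtens C f g)) \<and>
    (\<forall>A B. comp C (sym C B A) (sym C A B) = ident C (otens C A B)) \<and>
    (\<forall>A B D. sym C A (otens C B D) =
        comp C (mtens C (ident C B) (sym C A D)) (mtens C (sym C A B) (ident C D))) \<and>
    (\<forall>A B D. sym C (otens C A B) D =
        comp C (mtens C (sym C A D) (ident C B)) (mtens C (ident C A) (sym C B D)))"

definition discard_category :: "('o, 'm, 'x) dcat_scheme \<Rightarrow> bool" where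
  "discard_category C \<longleftrightarrow> strict_smc C \<and>
    (\<forall>A. disc C A \<in> hom C A (unit C)) \<and>
    disc C (unit C) = ident C (unit C) \<and>
    (\<forall>A B. disc C (otens C A B) = mtens C (disc C A) (disc C B))"

definition causal :: "('o, 'm, 'x) dcat_scheme \<Rightarrow> 'm \<Rightarrow> bool" where
  "causal C f \<longleftrightarrow> comp C (disc C (cod C f)) f = disc C (dom C f)"

definition prec :: "('o, 'm, 'x) dcat_scheme \<Rightarrow> 'o \<Rightarrow> 'o \<Rightarrow> 'm \<Rightarrow> 'm \<Rightarrow> bool" where
  "prec C A B f g \<longleftrightarrow> (\<exists>X g0 f0. g0 \<in> hom C A (otens C B X) \<and> f0 \<in> hom C X (unit C) \<and>
     f = comp C (mtens C (ident C B) f0) g0 \<and>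
     g = comp C (mtens C (ident C B) (disc C X)) g0)"

text \<open>p : A \<rightarrow> B \<otimes> X is a pseudo-purification of f : A \<rightarrow> B.\<close>
definition is_pure :: "('o, 'm, 'x) dcat_scheme \<Rightarrow> 'o \<Rightarrow> 'o \<Rightarrow> 'm \<Rightarrow> 'o \<Rightarrow> 'm \<Rightarrow> bool" where
  "is_pure C A B f X p \<longleftrightarrow> f \<in> hom C A B \<and> p \<in> hom C A (otens C B X) \<and>
     (\<forall>Y g. g \<in> hom C A (otens C B Y) \<and> f = comp C (mtens C (ident C B) (disc C Y)) g \<longrightarrow>
        (\<exists>c. c \<in> hom C X Y \<and> causal C c \<and> g = comp C (mtens C (ident C B) c) p))"

definition pseudo_purifiable :: "('o, 'm, 'x) dcat_scheme \<Rightarrow> bool" where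
  "pseudo_purifiable C \<longleftrightarrow>
    (\<forall>A B f. f \<in> hom C A B \<longrightarrow> (\<exists>X p. is_pure C A B f X p)) \<and>
    (\<forall>A1 B1 D A2 B2 f1 f2 X1 p1 X2 p2.
       f1 \<in> hom C A1 (otens C B1 D) \<and> f2 \<in> hom C (otens C D A2) B2 \<and>
       is_pure C A1 (otens C B1 D) f1 X1 p1 \<and> is_pure C (otens C D A2) B2 f2 X2 p2 \<longrightarrow>
       is_pure C (otens C A1 A2) (otens C B1 B2)
         (comp C (mtens C (ident C B1) f2) (mtens C f1 (ident C A2)))
         (otens C X1 X2)
         (comp C (mtens C (ident C (otens C B1 B2)) (sym C X2 X1))
           (comp C (mtens C (mtens C (ident C B1) p2) (ident C X1))
             (comp C (mtens C (ident C (otens C B1 D)) (sym C X1 A2))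
               (mtens C p1 (ident C A2))))))"

primrec hat :: "('o, 'm, 'x) dcat_scheme \<Rightarrow> (nat \<Rightarrow> 'o) \<Rightarrow> nat \<Rightarrow> 'o" where
  "hat C A 0 = unit C"
| "hat C A (Suc k) = otens C (hat C A k) (A (Suc k))"

definition monotone_seq :: "('o, 'm, 'x) dcat_scheme \<Rightarrow> (nat \<Rightarrow> 'o) \<Rightarrow> (nat \<Rightarrow> 'o) \<Rightarrow> (nat \<Rightarrow> 'm) \<Rightarrow> bool" where
  "monotone_seq C A B f \<longleftrightarrow> (\<forall>k\<ge>1.
     prec C (hat C A (Suc k)) (hat C B k)
       (comp C (mtens C (ident C (hat C B k)) (disc C (B (Suc k)))) (f (Suc k)))
       (mtens C (f k) (disc C (A (Suc k)))))"

text \<open>psi C A B n gir greg j = \<Psi>_(n+j).\<close>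
primrec psi :: "('o, 'm, 'x) dcat_scheme \<Rightarrow> (nat \<Rightarrow> 'o) \<Rightarrow> (nat \<Rightarrow> 'o) \<Rightarrow> nat \<Rightarrow> 'm \<Rightarrow> 'm \<Rightarrow> nat \<Rightarrow> 'm" where
  "psi C A B n gir greg 0 = gir"
| "psi C A B n gir greg (Suc j) =
     comp C (mtens C (ident C (hat C B (n + j))) greg)
            (mtens C (psi C A B n gir greg j) (ident C (A (Suc (n + j)))))"

definition regular_seq :: "('o, 'm, 'x) dcat_scheme \<Rightarrow> (nat \<Rightarrow> 'o) \<Rightarrow> (nat \<Rightarrow> 'o) \<Rightarrow> (nat \<Rightarrow> 'm) \<Rightarrow> bool" where
  "regular_seq C A B f \<longleftrightarrow> (\<exists>n A' B' M gir greg. n \<ge> 1 \<and>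
     (\<forall>k>n. A k = A' \<and> B k = B') \<and>
     gir \<in> hom C (hat C A n) (otens C (hat C B n) M) \<and>
     greg \<in> hom C (otens C M A') (otens C B' M) \<and>
     (\<forall>k\<ge>n. f k = comp C (mtens C (ident C (hat C B k)) (disc C M)) (psi C A B n gir greg (k - n))))"

definition stateful_seq :: "('o, 'm, 'x) dcat_scheme \<Rightarrow> (nat \<Rightarrow> 'o) \<Rightarrow> (nat \<Rightarrow> 'o) \<Rightarrow> (nat \<Rightarrow> 'o) \<Rightarrow> (nat \<Rightarrow> 'm) \<Rightarrow> bool" where
  "stateful_seq C A B M alpha \<longleftrightarrow> M 0 = unit C \<and>
     (\<forall>i\<ge>1. alpha i \<in> hom C (otens C (A i) (M (i - 1))) (otens C (B i) (M i)))"

definition regular_stateful :: "(nat \<Rightarrow> 'o) \<Rightarrow> (nat \<Rightarrow> 'o) \<Rightarrow> (nat \<Rightarrow> 'o) \<Rightarrow> (nat \<Rightarrow> 'm) \<Rightarrow> bool" where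
  "regular_stateful A B M alpha \<longleftrightarrow> (\<exists>n\<ge>1. \<forall>k\<ge>n.
     A k = A n \<and> B k = B n \<and> M k = M n \<and> alpha k = alpha n)"

fun Phi :: "('o, 'm, 'x) dcat_scheme \<Rightarrow> (nat \<Rightarrow> 'o) \<Rightarrow> (nat \<Rightarrow> 'o) \<Rightarrow> (nat \<Rightarrow> 'o) \<Rightarrow> (nat \<Rightarrow> 'm) \<Rightarrow> nat \<Rightarrow> 'm" where
  "Phi C A B M alpha 0 = ident C (unit C)"
| "Phi C A B M alpha (Suc 0) = alpha 1"
| "Phi C A B M alpha (Suc (Suc k)) =
     comp C (mtens C (ident C (hat C B (Suc k))) (alpha (Suc (Suc k))))
       (comp C (mtens C (ident C (hat C B (Suc k))) (sym C (M (Suc k)) (A (Suc (Suc k)))))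
          (mtens C (Phi C A B M alpha (Suc k)) (ident C (A (Suc (Suc k))))))"

definition FA :: "('o, 'm, 'x) dcat_scheme \<Rightarrow> (nat \<Rightarrow> 'o) \<Rightarrow> (nat \<Rightarrow> 'o) \<Rightarrow> (nat \<Rightarrow> 'o) \<Rightarrow> (nat \<Rightarrow> 'm) \<Rightarrow> nat \<Rightarrow> 'm" where
  "FA C A B M alpha k = comp C (mtens C (ident C (hat C B k)) (disc C (M k))) (Phi C A B M alpha k)"

end

theory Submission
  imports Defs
begin


locale DCL =
  fixes C :: "('o,'m,'x) dcat_scheme"
  assumes DC: "discard_category C"
begin

abbreviation cp (infixr "\<bullet>" 55) where "g \<bullet> f \<equiv> comp C g f"
abbreviation tn (infixr "\<otimes>" 60) where "f \<otimes> g \<equiv> mtens C f g"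
abbreviation ot (infixr "\<odot>" 60) where "a \<odot> b \<equiv> otens C a b"
abbreviation "idt \<equiv> ident C"
abbreviation "U \<equiv> unit C"
abbreviation "dsc \<equiv> disc C"
abbreviation "sy \<equiv> sym C"
abbreviation "ar \<equiv> arr C"
abbreviation "dm \<equiv> dom C"
abbreviation "cd \<equiv> cod C"

lemma SMC: "strict_smc C" using DC discard_category_def by auto
lemmas S0 = SMC[unfolded strict_smc_def]
lemmas ax0 = S0[THEN conjunct1]
lemmas ax1 = S0[THEN conjunct2, THEN conjunct1]
lemmas ax2 = S0[THEN conjunct2, THEN conjunct2, THEN conjunct1]
lemmas ax3 = S0[THEN conjunct2, THEN conjunct2, THEN conjunct2, THEN conjunct1]
lemmas ax4 = S0[THEN conjunct2, THEN conjunct2, THEN conjunct2, THEN conjunct2, THEN conjunct1]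
lemmas ax5 = S0[THEN conjunct2, THEN conjunct2, THEN conjunct2, THEN conjunct2, THEN conjunct2, THEN conjunct1]
lemmas ax6 = S0[THEN conjunct2, THEN conjunct2, THEN conjunct2, THEN conjunct2, THEN conjunct2, THEN conjunct2, THEN conjunct1]
lemmas ax7 = S0[THEN conjunct2, THEN conjunct2, THEN conjunct2, THEN conjunct2, THEN conjunct2, THEN conjunct2, THEN conjunct2, THEN conjunct1]
lemmas ax8 = S0[THEN conjunct2, THEN conjunct2, THEN conjunct2, THEN conjunct2, THEN conjunct2, THEN conjunct2, THEN conjunct2, THEN conjunct2, THEN conjunct1]
lemmas ax9 = S0[THEN conjunct2, THEN conjunct2, THEN conjunct2, THEN conjunct2, THEN conjunct2, THEN conjunct2, THEN conjunct2, THEN conjunct2, THEN conjunct2, THEN conjunct1]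
lemmas ax10 = S0[THEN conjunct2, THEN conjunct2, THEN conjunct2, THEN conjunct2, THEN conjunct2, THEN conjunct2, THEN conjunct2, THEN conjunct2, THEN conjunct2, THEN conjunct2, THEN conjunct1]
lemmas ax11 = S0[THEN conjunct2, THEN conjunct2, THEN conjunct2, THEN conjunct2, THEN conjunct2, THEN conjunct2, THEN conjunct2, THEN conjunct2, THEN conjunct2, THEN conjunct2, THEN conjunct2, THEN conjunct1]
lemmas ax12 = S0[THEN conjunct2, THEN conjunct2, THEN conjunct2, THEN conjunct2, THEN conjunct2, THEN conjunct2, THEN conjunct2, THEN conjunct2, THEN conjunct2, THEN conjunct2, THEN conjunct2, THEN conjunct2, THEN conjunct1]
lemmas ax13 = S0[THEN conjunct2, THEN conjunct2, THEN conjunct2, THEN conjunct2, THEN conjunct2, THEN conjunct2, THEN conjunct2, THEN conjunct2, THEN conjunct2, THEN conjunct2, THEN conjunct2, THEN conjunct2, THEN conjunct2, THEN conjunct1]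
lemmas ax14 = S0[THEN conjunct2, THEN conjunct2, THEN conjunct2, THEN conjunct2, THEN conjunct2, THEN conjunct2, THEN conjunct2, THEN conjunct2, THEN conjunct2, THEN conjunct2, THEN conjunct2, THEN conjunct2, THEN conjunct2, THEN conjunct2, THEN conjunct1]
lemmas ax15 = S0[THEN conjunct2, THEN conjunct2, THEN conjunct2, THEN conjunct2, THEN conjunct2, THEN conjunct2, THEN conjunct2, THEN conjunct2, THEN conjunct2, THEN conjunct2, THEN conjunct2, THEN conjunct2, THEN conjunct2, THEN conjunct2, THEN conjunct2]

lemma id_typ[simp]: "ar (idt A)" "dm (idt A) = A" "cd (idt A) = A"
  using ax0 unfolding hom_def by auto

lemma comp_typ[simp]: assumes "ar f" "ar g" "cd f = dm g"
  shows "ar (g \<bullet> f)" "dm (g \<bullet> f) = dm f" "cd (g \<bullet> f) = cd g"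
  using ax1 assms unfolding hom_def by auto

lemma comp_assoc: assumes "ar f" "ar g" "ar h" "cd f = dm g" "cd g = dm h"
  shows "h \<bullet> (g \<bullet> f) = (h \<bullet> g) \<bullet> f"
  using ax2 assms by blast

lemma id_l: "ar f \<Longrightarrow> cd f = A \<Longrightarrow> idt A \<bullet> f = f"
  using ax3 by blast
lemma id_r: "ar f \<Longrightarrow> dm f = A \<Longrightarrow> f \<bullet> idt A = f"
  using ax3 by blast

lemma ot_assoc[simp]: "(a \<odot> b) \<odot> c = a \<odot> (b \<odot> c)"
  using ax4 by blast
lemma ot_unit[simp]: "U \<odot> a = a" "a \<odot> U = a"
  using ax5 by blast+

lemma tn_typ[simp]: assumes "ar f" "ar g"
  shows "ar (f \<otimes> g)" "dm (f \<otimes> g) = dm f \<odot> dm g" "cd (f \<otimes> g) = cd f \<odot> cd g"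
  using ax6 assms unfolding hom_def by auto

lemma tn_assoc[simp]: "ar f \<Longrightarrow> ar g \<Longrightarrow> ar h \<Longrightarrow> (f \<otimes> g) \<otimes> h = f \<otimes> (g \<otimes> h)"
  using ax7 by blast

lemma tn_unit[simp]: "ar f \<Longrightarrow> idt U \<otimes> f = f" "ar f \<Longrightarrow> f \<otimes> idt U = f"
  using ax8 by blast+

lemma id_tn: "idt a \<otimes> idt b = idt (a \<odot> b)"
  using ax9 by blast

lemma interchange: assumes "ar f" "ar g" "ar f'" "ar g'" "cd f = dm g" "cd f' = dm g'"
  shows "(g \<bullet> f) \<otimes> (g' \<bullet> f') = (g \<otimes> g') \<bullet> (f \<otimes> f')"
  using ax10 assms by blast

lemma sy_typ[simp]: "ar (sy a b)" "dm (sy a b) = a \<odot> b" "cd (sy a b) = b \<odot> a"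
  using ax11 unfolding hom_def by auto

lemma sy_inv: "sy b a \<bullet> sy a b = idt (a \<odot> b)"
  using ax13 by blast

lemma dsc_typ[simp]: "ar (dsc a)" "dm (dsc a) = a" "cd (dsc a) = U"
  using DC unfolding discard_category_def hom_def by auto

lemma dsc_U: "dsc U = idt U" using DC unfolding discard_category_def by auto
lemma dsc_tn: "dsc (a \<odot> b) = dsc a \<otimes> dsc b" using DC unfolding discard_category_def by auto

lemma hom_iff: "f \<in> hom C a b \<longleftrightarrow> ar f \<and> dm f = a \<and> cd f = b" by (simp add: hom_def)

lemma idtn_comp: assumes "ar f" "ar g" "cd f = dm g"
  shows "(idt a \<otimes> g) \<bullet> (idt a \<otimes> f) = idt a \<otimes> (g \<bullet> f)"
  using interchange[of "idt a" "idt a" f g] assms id_l[of "idt a" a] by simp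

lemma tnid_comp: assumes "ar f" "ar g" "cd f = dm g"
  shows "(g \<otimes> idt a) \<bullet> (f \<otimes> idt a) = (g \<bullet> f) \<otimes> idt a"
  using interchange[of f g "idt a" "idt a"] assms id_l[of "idt a" a] by simp

lemma tn_split1: assumes "ar f" "ar g"
  shows "f \<otimes> g = (f \<otimes> idt (cd g)) \<bullet> (idt (dm f) \<otimes> g)"
  using interchange[of "idt (dm f)" f g "idt (cd g)"] assms id_l[of g] id_r[of f] by simp

lemma tn_split2: assumes "ar f" "ar g"
  shows "f \<otimes> g = (idt (cd f) \<otimes> g) \<bullet> (f \<otimes> idt (dm g))"
  using interchange[of f "idt (cd f)" "idt (dm g)" g] assms id_l[of f] id_r[of g] by simp

end



locale PPL = DCL +
  assumes PP: "pseudo_purifiable C"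
begin

lemma causal_iff: "ar c \<Longrightarrow> causal C c \<longleftrightarrow> dsc (cd c) \<bullet> c = dsc (dm c)"
  by (simp add: causal_def)

lemma pure_fac: assumes "is_pure C a b f x p" "g \<in> hom C a (b \<odot> y)" "(idt b \<otimes> dsc y) \<bullet> g = f"
  shows "\<exists>c. c \<in> hom C x y \<and> causal C c \<and> g = (idt b \<otimes> c) \<bullet> p"
  using assms unfolding is_pure_def by metis

lemma pure_hom: assumes "is_pure C a b f x p" shows "f \<in> hom C a b" "p \<in> hom C a (b \<odot> x)"
  using assms unfolding is_pure_def by auto

lemma pure_dil: assumes "is_pure C a b f x p" shows "(idt b \<otimes> dsc x) \<bullet> p = f"
proof -
  have fh: "f \<in> hom C a b" using pure_hom[OF assms] by auto
  have "(idt b \<otimes> dsc U) \<bullet> f = f" using fh by (simp add: hom_iff dsc_U id_l)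
  moreover have "f \<in> hom C a (b \<odot> U)" using fh by simp
  ultimately obtain c where c: "c \<in> hom C x U" "causal C c" "f = (idt b \<otimes> c) \<bullet> p"
    using pure_fac[OF assms] by metis
  have "c = dsc x" using c(1,2) by (simp add: hom_iff causal_iff dsc_U id_l)
  then show ?thesis using c by simp
qed

lemma pure_ex: "f \<in> hom C a b \<Longrightarrow> \<exists>x p. is_pure C a b f x p"
  using PP unfolding pseudo_purifiable_def by blast

lemma pure_dsc: "is_pure C a U (dsc a) a (idt a)"
  unfolding is_pure_def
proof (intro conjI allI impI)
  show "dsc a \<in> hom C a U" by (simp add: hom_iff)
  show "idt a \<in> hom C a (U \<odot> a)" by (simp add: hom_iff)
  fix y g assume g: "g \<in> hom C a (U \<odot> y) \<and> dsc a = (idt U \<otimes> dsc y) \<bullet> g"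
  then have "ar g" "dm g = a" "cd g = y" "dsc a = dsc y \<bullet> g" by (auto simp: hom_iff)
  then show "\<exists>c. c \<in> hom C a y \<and> causal C c \<and> g = (idt U \<otimes> c) \<bullet> idt a"
    by (intro exI[of _ g]) (simp add: hom_iff causal_iff id_r)
qed

lemmas pcomp = PP[unfolded pseudo_purifiable_def, THEN conjunct2, rule_format]

lemma pure_tdsc: assumes "is_pure C a0 b0 f x P"
  shows "is_pure C (a0 \<odot> a1) b0 (f \<otimes> dsc a1) (x \<odot> a1) (P \<otimes> idt a1)"
proof -
  have fh: "ar f" "dm f = a0" "cd f = b0" and Ph: "ar P" "dm P = a0" "cd P = b0 \<odot> x"
    using pure_hom[OF assms] by (auto simp: hom_iff)
  have 1: "is_pure C (a0 \<odot> a1) (b0 \<odot> U) ((idt b0 \<otimes> dsc a1) \<bullet> (f \<otimes> idt a1)) (x \<odot> a1)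
     ((idt (b0 \<odot> U) \<otimes> sy a1 x) \<bullet> ((idt b0 \<otimes> idt a1) \<otimes> idt x) \<bullet>
      (idt (b0 \<odot> U) \<otimes> sy x a1) \<bullet> (P \<otimes> idt a1))"
    by (rule pcomp) (use assms fh pure_dsc[of a1] in \<open>auto simp: hom_iff\<close>)
  have e1: "(idt b0 \<otimes> dsc a1) \<bullet> (f \<otimes> idt a1) = f \<otimes> dsc a1"
    using interchange[of f "idt b0" "idt a1" "dsc a1"] fh id_l[of f b0] id_r[of "dsc a1" a1] by simp
  have e2: "(idt b0 \<otimes> sy a1 x) \<bullet> (idt b0 \<otimes> sy x a1) = idt (b0 \<odot> x \<odot> a1)"
    by (simp add: idtn_comp sy_inv id_tn)
  have e3: "(idt b0 \<otimes> idt a1) \<otimes> idt x = idt (b0 \<odot> a1 \<odot> x)" by (simp add: id_tn)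
  have "(idt b0 \<otimes> sy a1 x) \<bullet> idt (b0 \<odot> a1 \<odot> x) \<bullet> (idt b0 \<otimes> sy x a1) \<bullet> (P \<otimes> idt a1)
      = (idt b0 \<otimes> sy a1 x) \<bullet> (idt b0 \<otimes> sy x a1) \<bullet> (P \<otimes> idt a1)"
    by (subst id_l) (auto simp: Ph)
  also have "\<dots> = ((idt b0 \<otimes> sy a1 x) \<bullet> (idt b0 \<otimes> sy x a1)) \<bullet> (P \<otimes> idt a1)"
    by (rule comp_assoc) (auto simp: Ph)
  also have "\<dots> = P \<otimes> idt a1" using e2 by (simp add: id_l Ph)
  finally show ?thesis using 1 e1 e3 by simp
qed

end



context DCL begin

lemma comp_assoc_r: assumes "ar f" "ar g" "ar h" "cd f = dm g" "cd g = dm h"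
  shows "(h \<bullet> g) \<bullet> f = h \<bullet> (g \<bullet> f)"
  using comp_assoc[OF assms] by simp

lemma idtn_comp2: assumes "ar f" "ar g" "cd f = dm g" "ar r" "cd r = a \<odot> dm f"
  shows "(idt a \<otimes> g) \<bullet> ((idt a \<otimes> f) \<bullet> r) = (idt a \<otimes> (g \<bullet> f)) \<bullet> r"
  using comp_assoc[of r "idt a \<otimes> f" "idt a \<otimes> g"] assms idtn_comp[of f g a] by simp

lemma dsc_split: "idt a \<otimes> dsc (b \<odot> z) = (idt a \<otimes> dsc b) \<bullet> (idt (a \<odot> b) \<otimes> dsc z)"
proof -
  have "(idt a \<otimes> dsc b) \<bullet> (idt (a \<odot> b) \<otimes> dsc z) = ((idt a \<otimes> dsc b) \<bullet> idt (a \<odot> b)) \<otimes> (idt U \<bullet> dsc z)"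
    by (subst interchange) auto
  also have "\<dots> = (idt a \<otimes> dsc b) \<otimes> dsc z" by (simp add: id_l id_r)
  finally show ?thesis by (simp add: dsc_tn)
qed

end

context PPL begin

lemma factor:
  assumes fP: "is_pure C a0 b0 f x P"
    and h: "h \<in> hom C (a0 \<odot> a1) (b0 \<odot> b1)"
    and pr: "prec C (a0 \<odot> a1) b0 ((idt b0 \<otimes> dsc b1) \<bullet> h) (f \<otimes> dsc a1)"
    and D: "D \<in> hom C (a0 \<odot> a1) (b0 \<odot> b1 \<odot> z)" "(idt (b0 \<odot> b1) \<otimes> dsc z) \<bullet> D = h"
  shows "\<exists>\<beta>. \<beta> \<in> hom C (x \<odot> a1) (b1 \<odot> z) \<and> D = (idt b0 \<otimes> \<beta>) \<bullet> (P \<otimes> idt a1)"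
proof -
  have fh: "ar f" "dm f = a0" "cd f = b0" and Ph: "ar P" "dm P = a0" "cd P = b0 \<odot> x"
    using pure_hom[OF fP] by (auto simp: hom_iff)
  have hh: "ar h" "dm h = a0 \<odot> a1" "cd h = b0 \<odot> b1" using h by (auto simp: hom_iff)
  have Dh: "ar D" "dm D = a0 \<odot> a1" "cd D = b0 \<odot> b1 \<odot> z" using D by (auto simp: hom_iff)
  obtain X g0 f0 where g0: "g0 \<in> hom C (a0 \<odot> a1) (b0 \<odot> X)" and f0: "f0 \<in> hom C X U"
    and m1: "(idt b0 \<otimes> dsc b1) \<bullet> h = (idt b0 \<otimes> f0) \<bullet> g0"
    and m2: "f \<otimes> dsc a1 = (idt b0 \<otimes> dsc X) \<bullet> g0"
    using pr unfolding prec_def by blast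
  have g0h: "ar g0" "dm g0 = a0 \<odot> a1" "cd g0 = b0 \<odot> X" and f0h: "ar f0" "dm f0 = X" "cd f0 = U"
    using g0 f0 by (auto simp: hom_iff)
  obtain c where c: "c \<in> hom C (x \<odot> a1) X" "g0 = (idt b0 \<otimes> c) \<bullet> (P \<otimes> idt a1)"
    using pure_fac[OF pure_tdsc[OF fP, of a1] g0 m2[symmetric]] by blast
  have ch: "ar c" "dm c = x \<odot> a1" "cd c = X" using c by (auto simp: hom_iff)
  define f2 where "f2 = f0 \<bullet> c"
  have f2h: "f2 \<in> hom C (x \<odot> a1) U" using ch f0h by (simp add: hom_iff f2_def)
  have marg: "(idt b0 \<otimes> dsc b1) \<bullet> h = (idt b0 \<otimes> f2) \<bullet> (P \<otimes> idt a1)"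
    unfolding m1 c(2) f2_def using ch f0h Ph by (simp add: idtn_comp2)
  obtain X1 p1 where p1: "is_pure C a0 (b0 \<odot> x) P X1 p1" using pure_ex[of P a0 "b0 \<odot> x"] Ph
    by (auto simp: hom_iff)
  obtain X2 p2 where p2: "is_pure C (x \<odot> a1) U f2 X2 p2" using pure_ex[OF f2h] by auto
  have p1h: "ar p1" "dm p1 = a0" "cd p1 = b0 \<odot> x \<odot> X1" using pure_hom(2)[OF p1] by (auto simp: hom_iff)
  have p2h: "ar p2" "dm p2 = x \<odot> a1" "cd p2 = X2" using pure_hom(2)[OF p2] by (auto simp: hom_iff)
  have SP: "is_pure C (a0 \<odot> a1) (b0 \<odot> U) ((idt b0 \<otimes> f2) \<bullet> (P \<otimes> idt a1)) (X1 \<odot> X2)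
     ((idt (b0 \<odot> U) \<otimes> sy X2 X1) \<bullet> ((idt b0 \<otimes> p2) \<otimes> idt X1) \<bullet>
      (idt (b0 \<odot> x) \<otimes> sy X1 a1) \<bullet> (p1 \<otimes> idt a1))"
    by (rule pcomp) (use Ph f2h p1 p2 in \<open>auto simp: hom_iff\<close>)
  define S where "S = (idt b0 \<otimes> sy X2 X1) \<bullet> (idt b0 \<otimes> p2 \<otimes> idt X1) \<bullet>
      ((idt b0 \<otimes> idt x) \<otimes> sy X1 a1) \<bullet> (p1 \<otimes> idt a1)"
  have SP': "is_pure C (a0 \<odot> a1) b0 ((idt b0 \<otimes> dsc b1) \<bullet> h) (X1 \<odot> X2) S"
    using SP p2h unfolding S_def marg by (simp add: id_tn)
  have Dm: "(idt b0 \<otimes> dsc (b1 \<odot> z)) \<bullet> D = (idt b0 \<otimes> dsc b1) \<bullet> h"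
    unfolding dsc_split D(2)[symmetric] by (rule comp_assoc_r) (auto simp: Dh)
  obtain c2 where c2: "c2 \<in> hom C (X1 \<odot> X2) (b1 \<odot> z)" "D = (idt b0 \<otimes> c2) \<bullet> S"
    using pure_fac[OF SP' _ Dm] D by auto
  have c2h: "ar c2" "dm c2 = X1 \<odot> X2" "cd c2 = b1 \<odot> z" using c2 by (auto simp: hom_iff)
  have p1m: "(idt b0 \<otimes> dsc (x \<odot> X1)) \<bullet> p1 = f"
    unfolding dsc_split
    by (subst comp_assoc_r) (auto simp: p1h pure_dil[OF p1] pure_dil[OF fP])
  obtain \<gamma> where \<gamma>: "\<gamma> \<in> hom C x (x \<odot> X1)" "p1 = (idt b0 \<otimes> \<gamma>) \<bullet> P"
    using pure_fac[OF fP _ p1m] p1h by (auto simp: hom_iff)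
  have gh: "ar \<gamma>" "dm \<gamma> = x" "cd \<gamma> = x \<odot> X1" using \<gamma> by (auto simp: hom_iff)
  have e1: "p1 \<otimes> idt a1 = (idt b0 \<otimes> \<gamma> \<otimes> idt a1) \<bullet> (P \<otimes> idt a1)"
    using interchange[of P "idt b0 \<otimes> \<gamma>" "idt a1" "idt a1"] gh Ph \<gamma>(2) by (simp add: id_l)
  define \<beta>0 where "\<beta>0 = sy X2 X1 \<bullet> (p2 \<otimes> idt X1) \<bullet> (idt x \<otimes> sy X1 a1) \<bullet> (\<gamma> \<otimes> idt a1)"
  have S2: "S = (idt b0 \<otimes> \<beta>0) \<bullet> (P \<otimes> idt a1)"
    unfolding S_def e1 \<beta>0_def using gh Ph p2h by (simp add: idtn_comp2)
  show ?thesis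
  proof (intro exI conjI)
    show "c2 \<bullet> \<beta>0 \<in> hom C (x \<odot> a1) (b1 \<odot> z)" unfolding \<beta>0_def using gh p2h c2h by (simp add: hom_iff)
    show "D = (idt b0 \<otimes> (c2 \<bullet> \<beta>0)) \<bullet> (P \<otimes> idt a1)"
      unfolding c2(2) S2 \<beta>0_def using gh p2h c2h Ph by (simp add: idtn_comp2)
  qed
qed

end



context PPL begin

lemma Phi_Suc: "k \<ge> 1 \<Longrightarrow> Phi C A B Mm \<alpha> (Suc k) =
   (idt (hat C B k) \<otimes> \<alpha> (Suc k)) \<bullet> (idt (hat C B k) \<otimes> sy (Mm k) (A (Suc k))) \<bullet>
   (Phi C A B Mm \<alpha> k \<otimes> idt (A (Suc k)))"
  by (cases k) simp_all

lemma main: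
  assumes fh: "\<forall>k\<ge>1. f k \<in> hom C (hat C A k) (hat C B k)"
    and mono: "monotone_seq C A B f"
    and reg: "regular_seq C A B f"
  shows "\<exists>M alpha. stateful_seq C A B M alpha \<and> regular_stateful A B M alpha \<and>
           (\<forall>k\<ge>1. FA C A B M alpha k = f k)"
proof -
  obtain n A' B' M gir greg where n1: "n \<ge> 1" and AB: "\<forall>k>n. A k = A' \<and> B k = B'"
    and gir: "gir \<in> hom C (hat C A n) (hat C B n \<odot> M)"
    and greg: "greg \<in> hom C (M \<odot> A') (B' \<odot> M)"
    and fpsi: "\<forall>k\<ge>n. f k = (idt (hat C B k) \<otimes> dsc M) \<bullet> psi C A B n gir greg (k - n)"
    using reg unfolding regular_seq_def by blast
  have girh: "ar gir" "dm gir = hat C A n" "cd gir = hat C B n \<odot> M" using gir by (auto simp: hom_iff)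
  have gregh: "ar greg" "dm greg = M \<odot> A'" "cd greg = B' \<odot> M" using greg by (auto simp: hom_iff)
  have psih: "ar (psi C A B n gir greg j) \<and> dm (psi C A B n gir greg j) = hat C A (n + j)
      \<and> cd (psi C A B n gir greg j) = hat C B (n + j) \<odot> M" for j
  proof (induction j)
    case 0 then show ?case using girh by simp
  next
    case (Suc j)
    have "A (Suc (n + j)) = A'" "B (Suc (n + j)) = B'" using AB by auto
    then show ?case using Suc gregh by simp
  qed
  have "\<forall>k. \<exists>x p. k \<ge> 1 \<longrightarrow> is_pure C (hat C A k) (hat C B k) (f k) x p"
    using fh pure_ex by blast
  then obtain Xp Pp where XP: "\<And>k. k \<ge> 1 \<Longrightarrow> is_pure C (hat C A k) (hat C B k) (f k) (Xp k) (Pp k)"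
    by metis
  define X where "X k = (if k < n then Xp k else M)" for k
  define P where "P k = (if k < n then Pp k else gir)" for k
  have Ppure: "is_pure C (hat C A k) (hat C B k) (f k) (X k) (P k)" if "1 \<le> k" "k < n" for k
    using XP[OF that(1)] that by (simp add: X_def P_def)
  have Ph: "ar (P k) \<and> dm (P k) = hat C A k \<and> cd (P k) = hat C B k \<odot> X k
        \<and> (idt (hat C B k) \<otimes> dsc (X k)) \<bullet> P k = f k" if "1 \<le> k" "k \<le> n" for k
  proof (cases "k < n")
    case True
    then show ?thesis using Ppure[OF that(1) True] pure_hom[OF Ppure[OF that(1) True]] pure_dil[OF Ppure[OF that(1) True]]
      by (auto simp: hom_iff)
  next
    case False
    then have "k = n" using that by auto
    then show ?thesis using girh fpsi False by (auto simp: X_def P_def)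
  qed
  have "\<forall>k. \<exists>\<beta>. 1 \<le> k \<longrightarrow> k < n \<longrightarrow> \<beta> \<in> hom C (X k \<odot> A (Suc k)) (B (Suc k) \<odot> X (Suc k)) \<and>
      P (Suc k) = (idt (hat C B k) \<otimes> \<beta>) \<bullet> (P k \<otimes> idt (A (Suc k)))"
  proof
    fix k :: nat
    show "\<exists>\<beta>. 1 \<le> k \<longrightarrow> k < n \<longrightarrow> \<beta> \<in> hom C (X k \<odot> A (Suc k)) (B (Suc k) \<odot> X (Suc k)) \<and>
      P (Suc k) = (idt (hat C B k) \<otimes> \<beta>) \<bullet> (P k \<otimes> idt (A (Suc k)))"
    proof (cases "1 \<le> k \<and> k < n")
      case True
      have h1: "f (Suc k) \<in> hom C (hat C A k \<odot> A (Suc k)) (hat C B k \<odot> B (Suc k))"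
        using fh by auto
      have h2: "prec C (hat C A k \<odot> A (Suc k)) (hat C B k)
          ((idt (hat C B k) \<otimes> dsc (B (Suc k))) \<bullet> f (Suc k)) (f k \<otimes> dsc (A (Suc k)))"
        using mono True unfolding monotone_seq_def by auto
      have PS: "ar (P (Suc k)) \<and> dm (P (Suc k)) = hat C A (Suc k) \<and> cd (P (Suc k)) = hat C B (Suc k) \<odot> X (Suc k)
        \<and> (idt (hat C B (Suc k)) \<otimes> dsc (X (Suc k))) \<bullet> P (Suc k) = f (Suc k)"
        using Ph[of "Suc k"] True by auto
      have h3: "P (Suc k) \<in> hom C (hat C A k \<odot> A (Suc k)) (hat C B k \<odot> B (Suc k) \<odot> X (Suc k))"
        using PS by (simp add: hom_iff)
      have h4: "(idt (hat C B k \<odot> B (Suc k)) \<otimes> dsc (X (Suc k))) \<bullet> P (Suc k) = f (Suc k)"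
        using PS by simp
      show ?thesis using factor[OF Ppure[of k] h1 h2 h3 h4] True by blast
    qed auto
  qed
  then obtain \<beta> where \<beta>: "\<And>k. 1 \<le> k \<Longrightarrow> k < n \<Longrightarrow> \<beta> k \<in> hom C (X k \<odot> A (Suc k)) (B (Suc k) \<odot> X (Suc k)) \<and>
      P (Suc k) = (idt (hat C B k) \<otimes> \<beta> k) \<bullet> (P k \<otimes> idt (A (Suc k)))"
    by metis
  define Mm where "Mm i = (if i = 0 then U else X i)" for i
  define \<alpha> where "\<alpha> i = (if i \<le> 1 then P 1 else if i \<le> n then \<beta> (i - 1) \<bullet> sy (A i) (X (i - 1))
      else greg \<bullet> sy A' M)" for i
  have PhiP: "1 \<le> k \<Longrightarrow> k \<le> n \<Longrightarrow> Phi C A B Mm \<alpha> k = P k" for k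
  proof (induction k)
    case 0 then show ?case by simp
  next
    case (Suc k)
    show ?case
    proof (cases "k = 0")
      case True then show ?thesis by (simp add: \<alpha>_def)
    next
      case False
      then have k: "1 \<le> k" "k < n" using Suc by auto
      have bk: "ar (\<beta> k)" "dm (\<beta> k) = X k \<odot> A (Suc k)" "cd (\<beta> k) = B (Suc k) \<odot> X (Suc k)"
        and PSk: "P (Suc k) = (idt (hat C B k) \<otimes> \<beta> k) \<bullet> (P k \<otimes> idt (A (Suc k)))"
        using \<beta>[OF k] by (auto simp: hom_iff)
      have "Phi C A B Mm \<alpha> (Suc k) = (idt (hat C B k) \<otimes> (\<beta> k \<bullet> sy (A (Suc k)) (X k))) \<bullet>
         (idt (hat C B k) \<otimes> sy (X k) (A (Suc k))) \<bullet> (P k \<otimes> idt (A (Suc k)))"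
        using Phi_Suc[OF k(1), of A B Mm \<alpha>] Suc k by (simp add: \<alpha>_def Mm_def)
      also have "\<dots> = P (Suc k)"
        using bk Ph[of k] k unfolding PSk by (simp add: idtn_comp2 comp_assoc_r sy_inv id_r)
      finally show ?thesis .
    qed
  qed
  have Phipsi: "Phi C A B Mm \<alpha> (n + j) = psi C A B n gir greg j" for j
  proof (induction j)
    case 0 then show ?case using PhiP[of n] n1 by (simp add: P_def)
  next
    case (Suc j)
    have AS: "A (Suc (n + j)) = A'" using AB by auto
    have "Phi C A B Mm \<alpha> (Suc (n + j)) = (idt (hat C B (n + j)) \<otimes> (greg \<bullet> sy A' M)) \<bullet>
         (idt (hat C B (n + j)) \<otimes> sy M A') \<bullet> psi C A B n gir greg j \<otimes> idt A'"
      using Phi_Suc[of "n + j" A B Mm \<alpha>] n1 Suc AS by (simp add: \<alpha>_def Mm_def X_def)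
    also have "\<dots> = psi C A B n gir greg (Suc j)"
      using gregh psih[of j] AS by (simp add: idtn_comp2 comp_assoc_r sy_inv id_r)
    finally show ?case by simp
  qed
  show ?thesis
  proof (intro exI conjI)
    show "stateful_seq C A B Mm \<alpha>"
      unfolding stateful_seq_def
    proof (intro conjI allI impI)
      show "Mm 0 = U" by (simp add: Mm_def)
      fix i :: nat assume i: "1 \<le> i"
      show "\<alpha> i \<in> hom C (A i \<odot> Mm (i - 1)) (B i \<odot> Mm i)"
      proof (cases "i = 1")
        case True then show ?thesis using Ph[of 1] n1 by (simp add: \<alpha>_def Mm_def hom_iff)
      next
        case False
        show ?thesis
        proof (cases "i \<le> n")
          case True
          then have "\<beta> (i - 1) \<in> hom C (X (i - 1) \<odot> A i) (B i \<odot> X i)"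
            using \<beta>[of "i - 1"] False i by auto
          then show ?thesis using True False i by (simp add: \<alpha>_def Mm_def hom_iff)
        next
          case F2: False
          then have "\<not> (i - 1 < n)" "i - 1 \<noteq> 0" "\<not> i < n" using n1 by auto
          then show ?thesis using F2 False i AB gregh n1 by (simp add: \<alpha>_def Mm_def X_def hom_iff)
        qed
      qed
    qed
    show "regular_stateful A B Mm \<alpha>"
      unfolding regular_stateful_def
      by (rule exI[of _ "Suc n"]) (use AB n1 in \<open>auto simp: \<alpha>_def Mm_def X_def\<close>)
    show "\<forall>k\<ge>1. FA C A B Mm \<alpha> k = f k"
    proof (intro allI impI)
      fix k :: nat assume k: "1 \<le> k"
      show "FA C A B Mm \<alpha> k = f k"
      proof (cases "k < n")
        case True
        then show ?thesis using PhiP[of k] Ph[of k] k by (simp add: FA_def Mm_def)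
      next
        case False
        then have "Phi C A B Mm \<alpha> k = psi C A B n gir greg (k - n)" using Phipsi[of "k - n"] by simp
        then show ?thesis using fpsi False k by (simp add: FA_def Mm_def X_def)
      qed
    qed
  qed
qed

end


theorem mainTheorem6:
  fixes C :: "('o, 'm, 'x) dcat_scheme"
    and A B :: "nat \<Rightarrow> 'o"
    and f :: "nat \<Rightarrow> 'm"
  assumes "discard_category C"
    and "pseudo_purifiable C"
    and "\<forall>k\<ge>1. f k \<in> hom C (hat C A k) (hat C B k)"
    and "monotone_seq C A B f"
    and "regular_seq C A B f"
  shows "\<exists>M alpha. stateful_seq C A B M alpha \<and> regular_stateful A B M alpha \<and>
           (\<forall>k\<ge>1. FA C A B M alpha k = f k)"
proof -
  interpret PPL C using assms(1,2) by (unfold_locales)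
  show ?thesis using main[OF assms(3,4,5)] .
qed

end
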